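(* Let $p$ be an odd prime, $s\ge1$, and $r\ge3$ an integer dividing $\frac{p^s\pm1}2$ (fixed sign). Let $\omega=\eta\sum_{i=0}^{r-2}\Delta_iS_i$, viewed as an $R_r$-linear combination of colored cores in the solid torus $S^1\times D^2$, and let $\tilde\omega=\sum_{i=0}^{r-2}(\eta\Delta_i)^{p^s}\tilde S_i$ be its lift to the $p^s$-fold cyclic cover $\tilde{S^1}\times D^2$. Then, in $V(\tilde{S^1}\times S^1)$, $$\tilde\omega\equiv\mp\left(\frac{-2r}{p}\right)^{s}\eta\sum_{i=0}^{r-2}\Delta_i\tilde S_i\pmod p,$$ where $\mp$ is opposite to the sign in the hypothesis.
   Context: $\lambda=e^{2\pi i/(2r)}$; $\Delta_0=1$, $\Delta_1=-\lambda-\lambda^{-1}$, $\Delta_{i+1}=\Delta_1\Delta_i-\Delta_{i-1}$; $\eta=-i(\lambda-\lambda^{-1})/\sqrt{2r}$. $S_i$ denotes the core of $S^1\times D^2$ with standard thickening colored $i$, and $\tilde S_i$ the core of $\tilde{S^1}\times D^2$ (where $\tilde{S^1}\to S^1$ is the $p^s$-fold cover) colored $i$; these are regarded as elements $[S_i]$, $[\tilde S_i]$ of the modules $V(S^1\times S^1)$, $V(\tilde{S^1}\times S^1)$ of the Blanchet–Habegger–Masbaum–Vogel $SU(2)$ TQFT (with $p=2r$ in their notation) with coefficients in $R_r=\mathbb Z[\tfrac1{2r},\xi_t]$ ($t=4r$ if $r$ even, $8r$ if odd) via $A\mapsto-e^{2\pi i/4r}$. $\left(\frac{-2r}{p}\right)$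 is the Legendre symbol; congruence is modulo $p$ times the module. *)

theory Defs
  imports Complex_Main "HOL-Number_Theory.Number_Theory"
begin

definition lam :: "nat \<Rightarrow> complex" where
  "lam r = exp (2 * pi * \<i> / of_nat (2 * r))"

fun Delta :: "nat \<Rightarrow> nat \<Rightarrow> complex" where
  "Delta r 0 = 1"
| "Delta r (Suc 0) = - lam r - inverse (lam r)"
| "Delta r (Suc (Suc i)) = Delta r (Suc 0) * Delta r (Suc i) - Delta r i"

definition eta :: "nat \<Rightarrow> complex" where
  "eta r = - \<i> * (lam r - inverse (lam r)) / complex_of_real (sqrt (real (2 * r)))"

definition tt :: "nat \<Rightarrow> nat" where
  "tt r = (if even r then 4 * r else 8 * r)"

definition xi :: "nat \<Rightarrow> complex" where
  "xi r = exp (2 * pi * \<i> / of_nat (tt r))"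

text \<open>The coefficient ring R_r = Z[1/(2r), xi_t], as a subring of the complex numbers.\<close>
definition Rr :: "nat \<Rightarrow> complex set" where
  "Rr r = {x. \<exists>(n::nat) (c::nat \<Rightarrow> int).
              x = (\<Sum>k<tt r. of_int (c k) * xi r ^ k) / of_nat (2 * r) ^ n}"

text \<open>Elements of V(S^1 x S^1) (resp. of the covering torus) are represented by their
  coordinates with respect to the basis of colored cores [S_i], i = 0..r-2.
  Two elements are congruent modulo p (times the module) iff all coordinate differences
  lie in p R_r.\<close>
definition cong_mod_module :: "nat \<Rightarrow> nat \<Rightarrow> (nat \<Rightarrow> complex) \<Rightarrow> (nat \<Rightarrow> complex) \<Rightarrow> bool" where
  "cong_mod_module r p x y \<longleftrightarrow>
     (\<forall>i \<le> r - 2. \<exists>z \<in> Rr r. x i - y i = of_nat p * z)"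

definition omega_tilde :: "nat \<Rightarrow> nat \<Rightarrow> nat \<Rightarrow> nat \<Rightarrow> complex" where
  "omega_tilde r p s i = (if i \<le> r - 2 then (eta r * Delta r i) ^ (p ^ s) else 0)"

definition scaled_omega :: "nat \<Rightarrow> complex \<Rightarrow> nat \<Rightarrow> complex" where
  "scaled_omega r c i = (if i \<le> r - 2 then c * eta r * Delta r i else 0)"

end

theory Submission
  imports Defs "HOL-Computational_Algebra.Fundamental_Theorem_Algebra"
begin

lemma tt_pos: "tt r > 0 \<longleftrightarrow> r > 0" by (auto simp: tt_def)

lemma xi_pow_t: "r > 0 \<Longrightarrow> xi r ^ tt r = 1"
proof -
  assume "r > 0"
  hence "tt r > 0" by (simp add: tt_pos)
  have "xi r ^ tt r = exp (of_nat (tt r) * (2 * pi * \<i> / of_nat (tt r)))"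
    unfolding xi_def by (rule exp_of_nat_mult[symmetric])
  also have "\<dots> = exp (2 * pi * \<i>)" using \<open>tt r > 0\<close> by simp
  finally show ?thesis by simp
qed

lemma pow_mod_eq: "(x::complex) ^ t = 1 \<Longrightarrow> x ^ n = x ^ (n mod t)"
proof -
  assume h: "x ^ t = 1"
  have "x ^ n = x ^ (t * (n div t) + n mod t)" by simp
  also have "\<dots> = (x ^ t) ^ (n div t) * x ^ (n mod t)" by (simp only: power_add power_mult)
  finally show ?thesis using h by simp
qed

definition Zx :: "nat \<Rightarrow> complex set" where
  "Zx r = {x. \<exists>c::nat \<Rightarrow> int. x = (\<Sum>k<tt r. of_int (c k) * xi r ^ k)}"

lemma Zx_gen:
  assumes "r > 0" "finite I"
  shows "(\<Sum>i\<in>I. of_int (f i) * xi r ^ (g i)) \<in> Zx r"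
proof -
  let ?t = "tt r"
  have t: "?t > 0" using assms by (simp add: tt_pos)
  have "(\<Sum>k<?t. of_int (\<Sum>i\<in>{i\<in>I. g i mod ?t = k}. f i) * xi r ^ k)
      = (\<Sum>k<?t. \<Sum>i\<in>{i\<in>I. g i mod ?t = k}. of_int (f i) * xi r ^ (g i))"
  proof (rule sum.cong[OF refl])
    fix k assume "k \<in> {..<?t}"
    have "of_int (\<Sum>i\<in>{i\<in>I. g i mod ?t = k}. f i) * xi r ^ k
        = (\<Sum>i\<in>{i\<in>I. g i mod ?t = k}. of_int (f i) * xi r ^ k)"
      by (simp add: sum_distrib_right)
    also have "\<dots> = (\<Sum>i\<in>{i\<in>I. g i mod ?t = k}. of_int (f i) * xi r ^ (g i))"
      using pow_mod_eq[OF xi_pow_t[OF assms(1)], of "g _"] by (intro sum.cong) auto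
    finally show "of_int (\<Sum>i\<in>{i\<in>I. g i mod ?t = k}. f i) * xi r ^ k
        = (\<Sum>i\<in>{i\<in>I. g i mod ?t = k}. of_int (f i) * xi r ^ (g i))" .
  qed
  also have "\<dots> = (\<Sum>i\<in>I. of_int (f i) * xi r ^ (g i))"
    by (rule sum.group) (use assms t in auto)
  finally show ?thesis unfolding Zx_def by (intro CollectI exI[of _ "\<lambda>k. \<Sum>i\<in>{i\<in>I. g i mod ?t = k}. f i"]) simp
qed

lemma Zx_add: assumes "x \<in> Zx r" "y \<in> Zx r" shows "x + y \<in> Zx r"
proof -
  obtain a b where x: "x = (\<Sum>k<tt r. of_int (a k) * xi r ^ k)"
    and y: "y = (\<Sum>k<tt r. of_int (b k) * xi r ^ k)" using assms unfolding Zx_def by auto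
  have "x + y = (\<Sum>k<tt r. of_int (a k + b k) * xi r ^ k)"
    unfolding x y by (simp add: sum.distrib distrib_right)
  thus ?thesis unfolding Zx_def by (intro CollectI exI[of _ "\<lambda>k. a k + b k"]) simp
qed

lemma Zx_neg: assumes "x \<in> Zx r" shows "- x \<in> Zx r"
proof -
  obtain a where x: "x = (\<Sum>k<tt r. of_int (a k) * xi r ^ k)" using assms unfolding Zx_def by auto
  have "- x = (\<Sum>k<tt r. of_int (- a k) * xi r ^ k)"
    unfolding x by (simp add: sum_negf)
  thus ?thesis unfolding Zx_def by (intro CollectI exI[of _ "\<lambda>k. - a k"]) simp
qed

lemma Zx_intmult: assumes "x \<in> Zx r" shows "of_int c * x \<in> Zx r"
proof -
  obtain a where x: "x = (\<Sum>k<tt r. of_int (a k) * xi r ^ k)" using assms unfolding Zx_def by auto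
  have "of_int c * x = (\<Sum>k<tt r. of_int (c * a k) * xi r ^ k)"
    unfolding x by (simp add: sum_distrib_left mult.assoc)
  thus ?thesis unfolding Zx_def by (intro CollectI exI[of _ "\<lambda>k. c * a k"]) simp
qed

lemma Zx_mult: assumes "r > 0" "x \<in> Zx r" "y \<in> Zx r" shows "x * y \<in> Zx r"
proof -
  obtain a b where x: "x = (\<Sum>k<tt r. of_int (a k) * xi r ^ k)"
    and y: "y = (\<Sum>k<tt r. of_int (b k) * xi r ^ k)" using assms unfolding Zx_def by auto
  have "x * y = (\<Sum>k<tt r. \<Sum>l<tt r. of_int (a k) * xi r ^ k * (of_int (b l) * xi r ^ l))"
    unfolding x y by (simp add: sum_product)
  also have "\<dots> = (\<Sum>q\<in>{..<tt r} \<times> {..<tt r}. of_int (a (fst q) * b (snd q)) * xi r ^ (fst q + snd q))"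
    by (simp add: sum.cartesian_product power_add mult_ac case_prod_beta)
  finally show ?thesis using Zx_gen[OF assms(1), of "{..<tt r} \<times> {..<tt r}" "\<lambda>q. a (fst q) * b (snd q)" "\<lambda>q. fst q + snd q"] by simp
qed

lemma Zx_pow: "r > 0 \<Longrightarrow> xi r ^ j \<in> Zx r"
  using Zx_gen[of r "{0::nat}" "\<lambda>_. 1" "\<lambda>_. j"] by simp

lemma Zx_int: "r > 0 \<Longrightarrow> of_int a \<in> Zx r"
  using Zx_gen[of r "{0::nat}" "\<lambda>_. a" "\<lambda>_. 0"] by simp

lemma Rr_alt: "Rr r = {x. \<exists>z n. z \<in> Zx r \<and> x = z / of_nat (2*r) ^ n}"
  unfolding Rr_def Zx_def by blast

lemma Zx_Rr: "z \<in> Zx r \<Longrightarrow> z \<in> Rr r"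
  unfolding Rr_alt by (rule CollectI, rule exI[of _ z], rule exI[of _ 0]) simp

lemma Rr_add: assumes "r > 0" "x \<in> Rr r" "y \<in> Rr r" shows "x + y \<in> Rr r"
proof -
  obtain a n b m where a: "a \<in> Zx r" "x = a / of_nat (2*r) ^ n" and b: "b \<in> Zx r" "y = b / of_nat (2*r) ^ m"
    using assms unfolding Rr_alt by auto
  have ne: "(of_nat (2*r) :: complex) \<noteq> 0" using assms by simp
  have "x + y = (of_int ((2*r)^m) * a + of_int ((2*r)^n) * b) / of_nat (2*r) ^ (n+m)"
    unfolding a b using ne by (simp add: field_simps power_add)
  moreover have "of_int ((2*r)^m) * a + of_int ((2*r)^n) * b \<in> Zx r"
    using a b by (intro Zx_add Zx_intmult)
  ultimately show ?thesis unfolding Rr_alt by blast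
qed

lemma Rr_mult: assumes "r > 0" "x \<in> Rr r" "y \<in> Rr r" shows "x * y \<in> Rr r"
proof -
  obtain a n b m where a: "a \<in> Zx r" "x = a / of_nat (2*r) ^ n" and b: "b \<in> Zx r" "y = b / of_nat (2*r) ^ m"
    using assms unfolding Rr_alt by auto
  have "x * y = (a * b) / of_nat (2*r) ^ (n+m)"
    unfolding a b by (simp add: power_add)
  moreover have "a * b \<in> Zx r" using a b assms by (intro Zx_mult)
  ultimately show ?thesis unfolding Rr_alt by blast
qed

lemma Rr_neg: assumes "x \<in> Rr r" shows "- x \<in> Rr r"
proof -
  obtain a n where a: "a \<in> Zx r" "x = a / of_nat (2*r) ^ n" using assms unfolding Rr_alt by auto
  have "- x = (- a) / of_nat (2*r) ^ n" using a by simp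
  thus ?thesis using Zx_neg[OF a(1)] unfolding Rr_alt by blast
qed

lemma Rr_diff: "r > 0 \<Longrightarrow> x \<in> Rr r \<Longrightarrow> y \<in> Rr r \<Longrightarrow> x - y \<in> Rr r"
  using Rr_add[of r x "-y"] Rr_neg[of y r] by simp

lemma Rr_int: "r > 0 \<Longrightarrow> of_int a \<in> Rr r"
  by (intro Zx_Rr Zx_int)

lemma Rr_nat: "r > 0 \<Longrightarrow> of_nat a \<in> Rr r"
  using Rr_int[of r "int a"] by simp

lemma Rr_xi: "r > 0 \<Longrightarrow> xi r ^ j \<in> Rr r"
  by (intro Zx_Rr Zx_pow)

lemma Rr_inv2r: "r > 0 \<Longrightarrow> 1 / of_nat (2*r) \<in> Rr r"
  unfolding Rr_alt using Zx_int[of r 1] by (auto intro!: exI[of _ 1] exI[of _ 1])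

lemma Rr_power: "r > 0 \<Longrightarrow> x \<in> Rr r \<Longrightarrow> x ^ n \<in> Rr r"
  by (induction n) (auto intro: Rr_mult simp: Rr_int[of r 1, simplified])

lemma Rr_prod: "r > 0 \<Longrightarrow> (\<And>i. i \<in> I \<Longrightarrow> f i \<in> Rr r) \<Longrightarrow> prod f I \<in> Rr r"
  by (induction I rule: infinite_finite_induct) (auto intro: Rr_mult simp: Rr_int[of r 1, simplified])

lemma sum_in_Rr: "r > 0 \<Longrightarrow> (\<And>i. i \<in> I \<Longrightarrow> f i \<in> Rr r) \<Longrightarrow> sum f I \<in> Rr r"
  by (induction I rule: infinite_finite_induct) (auto intro: Rr_add simp: Rr_int[of r 0, simplified])



definition cg :: "nat \<Rightarrow> nat \<Rightarrow> complex \<Rightarrow> complex \<Rightarrow> bool" where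
  "cg r p x y \<longleftrightarrow> (\<exists>z\<in>Rr r. x - y = of_nat p * z)"

lemma cg_refl: "r > 0 \<Longrightarrow> cg r p x x"
  unfolding cg_def using Rr_int[of r 0] by (intro bexI[of _ 0]) auto

lemma cg_sym: "cg r p x y \<Longrightarrow> cg r p y x"
  unfolding cg_def by (auto intro!: bexI[of _ "- _"] Rr_neg simp: algebra_simps)

lemma cg_trans: "r > 0 \<Longrightarrow> cg r p x y \<Longrightarrow> cg r p y w \<Longrightarrow> cg r p x w"
proof -
  assume r: "r > 0" and "cg r p x y" "cg r p y w"
  then obtain z1 z2 where "z1 \<in> Rr r" "z2 \<in> Rr r" "x - y = of_nat p * z1" "y - w = of_nat p * z2"
    unfolding cg_def by auto
  moreover have "x - w = (x - y) + (y - w)" by simp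
  ultimately have "x - w = of_nat p * (z1 + z2)" by (simp add: distrib_left)
  thus ?thesis unfolding cg_def using Rr_add[OF r \<open>z1 \<in> Rr r\<close> \<open>z2 \<in> Rr r\<close>] by blast
qed

lemma cg_add: "r > 0 \<Longrightarrow> cg r p x y \<Longrightarrow> cg r p x' y' \<Longrightarrow> cg r p (x + x') (y + y')"
proof -
  assume r: "r > 0" and "cg r p x y" "cg r p x' y'"
  then obtain z1 z2 where "z1 \<in> Rr r" "z2 \<in> Rr r" "x - y = of_nat p * z1" "x' - y' = of_nat p * z2"
    unfolding cg_def by auto
  moreover have "(x + x') - (y + y') = (x - y) + (x' - y')" by simp
  ultimately have "(x + x') - (y + y') = of_nat p * (z1 + z2)" by (simp add: distrib_left)
  thus ?thesis unfolding cg_def using Rr_add[OF r \<open>z1 \<in> Rr r\<close> \<open>z2 \<in> Rr r\<close>] by blast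
qed

lemma cg_mult:
  assumes r: "r > 0" and "cg r p x y" "cg r p x' y'" "x \<in> Rr r" "y' \<in> Rr r"
  shows "cg r p (x * x') (y * y')"
proof -
  obtain z1 z2 where z: "z1 \<in> Rr r" "z2 \<in> Rr r" "x - y = of_nat p * z1" "x' - y' = of_nat p * z2"
    using assms unfolding cg_def by auto
  have "x * x' - y * y' = x * (x' - y') + (x - y) * y'" by (simp add: algebra_simps)
  also have "\<dots> = of_nat p * (x * z2 + z1 * y')" using z by (simp add: algebra_simps)
  finally show ?thesis unfolding cg_def
    using assms z by (intro bexI[of _ "x * z2 + z1 * y'"] Rr_add Rr_mult) auto
qed

lemma cg_pow:
  assumes r: "r > 0" and "cg r p x y" "x \<in> Rr r" "y \<in> Rr r"
  shows "cg r p (x ^ n) (y ^ n)"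
proof (induction n)
  case 0 then show ?case using cg_refl[OF r] by simp
next
  case (Suc n)
  show ?case unfolding power_Suc
    by (rule cg_mult[OF r assms(2) Suc assms(3) Rr_power[OF r assms(4)]])
qed

lemma cg_int:
  assumes r: "r > 0" and "[a = b] (mod int p)"
  shows "cg r p (of_int a) (of_int b)"
proof -
  obtain k where "a - b = int p * k" using assms(2) by (metis cong_iff_dvd_diff dvdE)
  hence "(of_int a :: complex) - of_int b = of_nat p * of_int k"
    by (metis of_int_diff of_int_mult of_int_of_nat_eq)
  thus ?thesis unfolding cg_def using Rr_int[OF r] by blast
qed

lemma frob:
  assumes r: "r > 0" and p: "prime p" and A: "A \<in> Rr r" and B: "B \<in> Rr r"
  shows "cg r p ((A + B) ^ p) (A ^ p + B ^ p)"
proof -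
  have p0: "p \<noteq> 0" using p by auto
  let ?f = "\<lambda>k. of_nat (p choose k) * A ^ k * B ^ (p - k)"
  let ?M = "{..p} - {0, p}"
  have "(A + B) ^ p = (\<Sum>k\<le>p. ?f k)" by (rule binomial_ring)
  also have "\<dots> = (\<Sum>k\<in>?M. ?f k) + (\<Sum>k\<in>{0,p}. ?f k)"
    by (rule sum.subset_diff) auto
  also have "(\<Sum>k\<in>{0,p}. ?f k) = A ^ p + B ^ p" using p0 by simp
  also have "(\<Sum>k\<in>?M. ?f k) = of_nat p * (\<Sum>k\<in>?M. of_nat ((p choose k) div p) * A ^ k * B ^ (p - k))"
    unfolding sum_distrib_left
  proof (rule sum.cong[OF refl])
    fix k assume "k \<in> ?M"
    hence "p dvd (p choose k)" using p p0 by (intro dvd_choose_prime) auto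
    hence "(of_nat (p choose k) :: complex) = of_nat p * of_nat ((p choose k) div p)"
      by (metis dvd_mult_div_cancel of_nat_mult)
    thus "?f k = of_nat p * (of_nat ((p choose k) div p) * A ^ k * B ^ (p - k))" by simp
  qed
  finally show ?thesis unfolding cg_def
    using A B r by (intro bexI[of _ "\<Sum>k\<in>?M. of_nat ((p choose k) div p) * A ^ k * B ^ (p - k)"]
       sum_in_Rr) (auto intro!: Rr_mult Rr_power Rr_nat)
qed



lemma roots_prod:
  assumes n: "n > 0"
  shows "(\<Prod>k\<in>{1..<n}. 1 - cis (2 * pi * real k / real n)) = of_nat n"
proof -
  define P :: "complex poly" where "P = monom 1 n - 1"
  have polyP: "poly P z = z ^ n - 1" for z by (simp add: P_def poly_monom)
  have dP: "poly (pderiv P) z = of_nat n * z ^ (n - 1)" for z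
    by (simp add: P_def pderiv_diff pderiv_monom poly_monom)
  have sqf: "rsquarefree P"
    unfolding rsquarefree_roots
  proof (intro allI notI)
    fix a assume h: "poly P a = 0 \<and> poly (pderiv P) a = 0"
    hence "a ^ n = 1" using polyP by simp
    hence "a \<noteq> 0" using n by (auto simp: power_0_left)
    thus False using h dP n by simp
  qed
  have "degree (monom 1 n + (-1) :: complex poly) = n"
    using n by (subst degree_add_eq_left) (auto simp: degree_monom_eq)
  hence degP: "degree P = n" unfolding P_def by simp
  have lcP: "lead_coeff P = 1" using degP n by (simp add: P_def)
  have "P = (\<Prod>z|poly P z = 0. [:-z, 1:])"
    using complex_poly_decompose_rsquarefree[OF sqf] lcP by simp
  also have "{z. poly P z = 0} = {z. z ^ n = 1}" using polyP by auto
  also have "(\<Prod>z\<in>{z. z ^ n = 1}. [:-z, 1:]) = (\<Prod>k<n. [:- cis (2 * pi * real k / real n), 1:])"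
    by (rule prod.reindex_bij_betw[symmetric, OF bij_betw_roots_unity[OF n]])
  also have "{..<n} = insert 0 {1..<n}" using n by auto
  finally have P1: "P = [:-1, 1:] * (\<Prod>k\<in>{1..<n}. [:- cis (2 * pi * real k / real n), 1:])"
    by simp
  have "poly P x = poly ([:-1, 1:] * (\<Sum>i<n. monom 1 i)) x" for x
  proof -
    have "poly ([:-1, 1:] * (\<Sum>i<n. monom 1 i)) x = (x - 1) * (\<Sum>i<n. x ^ i)"
      by (simp only: poly_mult poly_sum poly_monom) simp
    thus ?thesis by (simp add: polyP power_diff_1_eq)
  qed
  hence P2: "P = [:-1, 1:] * (\<Sum>i<n. monom 1 i)"
    by (intro poly_eq_poly_eq_iff[THEN iffD1] ext)
  have ne: "[:-1, 1:] \<noteq> (0 :: complex poly)" by simp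
  have "(\<Sum>i<n. monom 1 i) = (\<Prod>k\<in>{1..<n}. [:- cis (2 * pi * real k / real n), 1:])"
    using P1 P2 mult_left_cancel[OF ne] by metis
  hence "poly (\<Sum>i<n. monom 1 i) 1 = poly (\<Prod>k\<in>{1..<n}. [:- cis (2 * pi * real k / real n), 1:]) (1::complex)"
    by simp
  thus ?thesis by (simp add: poly_sum poly_monom poly_prod)
qed

lemma one_minus_cis2: "1 - cis (2 * x) = cis x * (- 2 * \<i> * complex_of_real (sin x))"
proof -
  have c: "cos (2*x) = 1 - 2 * sin x ^ 2" by (rule cos_double_sin)
  have s: "sin (2*x) = 2 * sin x * cos x" by (rule sin_double)
  show ?thesis by (simp add: complex_eq_iff c s power2_eq_square)
qed

lemma norm_one_minus_cis2: "norm (1 - cis (2 * x)) = 2 * \<bar>sin x\<bar>"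
  unfolding one_minus_cis2 by (simp add: norm_mult)

definition sf :: "nat \<Rightarrow> nat \<Rightarrow> real" where
  "sf r k = 2 * sin (pi * real k / real (2 * r))"

lemma sf_pos: "0 < k \<Longrightarrow> k < 2 * r \<Longrightarrow> sf r k > 0"
  unfolding sf_def by (intro mult_pos_pos sin_gt_zero) (auto simp: field_simps)

lemma sf_prod_sq:
  assumes r: "r > 0"
  shows "(\<Prod>k\<in>{1..<r}. sf r k) = sqrt (real r)"
proof -
  have "real (2 * r) = norm (of_nat (2 * r) :: complex)" by simp
  also have "\<dots> = norm (\<Prod>k\<in>{1..<2*r}. 1 - cis (2 * pi * real k / real (2 * r)))"
    using roots_prod[of "2 * r"] r by simp
  also have "\<dots> = (\<Prod>k\<in>{1..<2*r}. norm (1 - cis (2 * (pi * real k / real (2 * r)))))"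
    by (simp add: prod_norm mult.assoc)
  also have "\<dots> = (\<Prod>k\<in>{1..<2*r}. sf r k)"
  proof (rule prod.cong[OF refl])
    fix k assume "k \<in> {1..<2*r}"
    hence "sf r k > 0" by (intro sf_pos) auto
    thus "norm (1 - cis (2 * (pi * real k / real (2 * r)))) = sf r k"
      unfolding norm_one_minus_cis2 by (simp add: sf_def)
  qed
  also have "\<dots> = (\<Prod>k\<in>{1..<r}. sf r k) * (\<Prod>k\<in>{r..<2*r}. sf r k)"
    using r by (intro prod.atLeastLessThan_concat[symmetric]) auto
  also have "(\<Prod>k\<in>{r..<2*r}. sf r k) = sf r r * (\<Prod>k\<in>{Suc r..<2*r}. sf r k)"
    using r by (intro prod.atLeast_Suc_lessThan) auto
  also have "sf r r = 2" using r by (simp add: sf_def)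
  also have "(\<Prod>k\<in>{Suc r..<2*r}. sf r k) = (\<Prod>k\<in>{1..<r}. sf r k)"
  proof (rule sym, rule prod.reindex_bij_witness[of _ "\<lambda>j. 2 * r - j" "\<lambda>k. 2 * r - k"])
    fix j assume j: "j \<in> {1..<r}"
    have "sf r (2 * r - j) = 2 * sin (pi - pi * real j / real (2 * r))"
      unfolding sf_def using j r by (simp add: of_nat_diff field_simps)
    also have "\<dots> = sf r j" by (simp add: sf_def)
    finally show "sf r (2 * r - j) = sf r j" .
  qed auto
  finally have eq: "real (2 * r) = 2 * (\<Prod>k\<in>{1..<r}. sf r k) ^ 2"
    by (simp add: power2_eq_square)
  have pos: "(\<Prod>k\<in>{1..<r}. sf r k) > 0" by (intro prod_pos) (auto intro: sf_pos)
  have "sqrt (real r) = sqrt ((\<Prod>k\<in>{1..<r}. sf r k) ^ 2)" using eq by simp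
  thus ?thesis using pos by simp
qed



lemma xi_pow_div:
  assumes r: "r > 0" and mk: "m * k = tt r"
  shows "xi r ^ m = cis (2 * pi / real k)"
proof -
  have k: "k > 0" using mk r tt_pos[of r] by (cases k) auto
  have "xi r ^ m = exp (of_nat m * (2 * pi * \<i> / of_nat (tt r)))"
    unfolding xi_def by (rule exp_of_nat_mult[symmetric])
  also have "of_nat m * (2 * pi * \<i> / of_nat (tt r)) = \<i> * complex_of_real (2 * pi / real k)"
  proof -
    have t: "(of_nat (tt r)::complex) = of_nat m * of_nat k" using mk by (metis of_nat_mult)
    have "of_nat k \<noteq> (0::complex)" using k by simp
    moreover have "m \<noteq> 0" using mk r tt_pos[of r] by (metis mult_0 less_irrefl)
    hence "of_nat m \<noteq> (0::complex)" by simp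
    ultimately show ?thesis unfolding t by (simp add: field_simps)
  qed
  finally show ?thesis by (simp add: cis_conv_exp)
qed

lemma lam_cis: "r > 0 \<Longrightarrow> lam r = cis (2 * pi / real (2 * r))"
  unfolding lam_def cis_conv_exp by (simp add: field_simps)

lemma tt_cases: "tt r = 2 * r * 2 \<or> tt r = 2 * r * 4"
  by (auto simp: tt_def)

lemma lam_Rr: assumes r: "r > 0" shows "lam r \<in> Rr r"
proof -
  obtain d where "d * (2 * r) = tt r" using tt_cases[of r] by (metis mult.commute)
  thus ?thesis using xi_pow_div[OF r, of d "2*r"] lam_cis[OF r] Rr_xi[OF r, of d] by simp
qed

lemma i_Rr: assumes r: "r > 0" shows "\<i> \<in> Rr r"
proof -
  have "tt r = r * 4 \<or> tt r = (2 * r) * 4" by (auto simp: tt_def)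
  then obtain d where "d * 4 = tt r" by metis
  moreover have "cis (2 * pi / real 4) = \<i>" by (simp add: complex_eq_iff)
  ultimately show ?thesis using xi_pow_div[OF r, of d 4] Rr_xi[OF r, of d] by simp
qed

lemma sqrt2_Rr: assumes r: "r > 0" shows "complex_of_real (sqrt 2) \<in> Rr r"
proof -
  obtain d where d: "d * 8 = tt r"
  proof (cases "even r")
    case True then obtain j where "r = 2 * j" by auto
    thus ?thesis using that[of j] True by (simp add: tt_def)
  next
    case False thus ?thesis using that[of r] by (simp add: tt_def)
  qed
  have "cis (2 * pi / real 8) * (1 - \<i>) = complex_of_real (sqrt 2)"
  proof -
    have e: "2 * pi / real 8 = pi / 4" by simp
    have "cis (pi / 4) * (1 - \<i>) = complex_of_real (sqrt 2)"
      by (simp add: complex_eq_iff cos_45 sin_45)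
    thus ?thesis unfolding e .
  qed
  moreover have "1 - \<i> \<in> Rr r" using Rr_diff[OF r Rr_int[OF r, of 1] i_Rr[OF r]] by simp
  ultimately show ?thesis using xi_pow_div[OF r d] Rr_mult[OF r Rr_xi[OF r, of d]] by metis
qed

lemma zeta_Rr: assumes r: "r > 0" shows "cis (2 * pi / real (4 * r)) \<in> Rr r"
proof -
  have "tt r = 1 * (4 * r) \<or> tt r = 2 * (4 * r)" by (auto simp: tt_def)
  then obtain d where "d * (4 * r) = tt r" by metis
  thus ?thesis using xi_pow_div[OF r, of d "4*r"] Rr_xi[OF r, of d] by simp
qed

lemma inv_in_Rr:
  assumes r: "r > 0" and z: "z \<in> Rr r" and n: "n > 0" and zn: "z ^ n = 1"
  shows "inverse z \<in> Rr r"
proof -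
  have "z * z ^ (n - 1) = 1" using n zn by (cases n) auto
  hence "inverse z = z ^ (n - 1)" by (rule inverse_unique)
  thus ?thesis using Rr_power[OF r z] by simp
qed

lemma sf_Rr: assumes r: "r > 0" shows "complex_of_real (sf r k) \<in> Rr r"
proof -
  let ?z = "cis (2 * pi / real (4 * r))"
  have zn: "?z ^ (4 * r) = 1" using r by (simp add: DeMoivre)
  have iz: "inverse ?z \<in> Rr r" using inv_in_Rr[OF r zeta_Rr[OF r] _ zn] r by simp
  have "- \<i> * (?z ^ k - inverse ?z ^ k) = complex_of_real (sf r k)"
  proof -
    have e: "real k * (2 * pi / real (4 * r)) = pi * real k / real (2 * r)" using r by (simp add: field_simps)
    show ?thesis unfolding sf_def power_inverse DeMoivre e by (simp add: complex_eq_iff)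
  qed
  moreover have "- \<i> * (?z ^ k - inverse ?z ^ k) \<in> Rr r"
    using r iz zeta_Rr[OF r] i_Rr[OF r]
    by (intro Rr_mult Rr_neg Rr_diff Rr_power) auto
  ultimately show ?thesis by simp
qed

lemma sqrt2r_Rr: assumes r: "r > 0" shows "complex_of_real (sqrt (real (2 * r))) \<in> Rr r"
proof -
  have "sqrt (real (2 * r)) = sqrt 2 * (\<Prod>k\<in>{1..<r}. sf r k)"
    using sf_prod_sq[OF r] by (simp add: real_sqrt_mult)
  hence "complex_of_real (sqrt (real (2 * r))) = complex_of_real (sqrt 2) * (\<Prod>k\<in>{1..<r}. complex_of_real (sf r k))"
    by simp
  moreover have "(\<Prod>k\<in>{1..<r}. complex_of_real (sf r k)) \<in> Rr r"
    by (rule Rr_prod[OF r sf_Rr[OF r]])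
  ultimately show ?thesis using Rr_mult[OF r sqrt2_Rr[OF r]] by simp
qed



lemma lam_pow: "r > 0 \<Longrightarrow> lam r ^ (2 * r) = 1"
  by (simp add: lam_cis DeMoivre)

lemma lam_ne0: "lam r \<noteq> 0" by (simp add: lam_def)

lemma Delta_closed:
  fixes r :: nat
  defines "L \<equiv> lam r" and "M \<equiv> inverse (lam r)"
  shows "(L - M) * Delta r i = (-1) ^ i * (L ^ Suc i - M ^ Suc i)"
proof -
  have LM: "L * M = 1" using lam_ne0[of r] by (simp add: L_def M_def)
  have "(L - M) * Delta r i = (-1) ^ i * (L ^ Suc i - M ^ Suc i) \<and>
        (L - M) * Delta r (Suc i) = (-1) ^ Suc i * (L ^ Suc (Suc i) - M ^ Suc (Suc i))"
  proof (induction i)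
    case 0
    have "(L - M) * (- L - M) = - (L * L - M * M)" by (simp add: algebra_simps)
    thus ?case by (simp add: L_def M_def power2_eq_square)
  next
    case (Suc i)
    have IH1: "(L - M) * Delta r i = (-1) ^ i * (L ^ Suc i - M ^ Suc i)" using Suc by simp
    have IH2: "(L - M) * Delta r (Suc i) = - ((-1) ^ i * (L ^ Suc (Suc i) - M ^ Suc (Suc i)))"
      using Suc by simp
    have key: "(L + M) * (L ^ Suc (Suc i) - M ^ Suc (Suc i))
        = (L ^ Suc (Suc (Suc i)) - M ^ Suc (Suc (Suc i))) + (L ^ Suc i - M ^ Suc i)"
    proof -
      have "(L + M) * (L ^ Suc (Suc i) - M ^ Suc (Suc i))
          = L ^ Suc (Suc (Suc i)) - M ^ Suc (Suc (Suc i)) + (L * M) * L ^ Suc i - (L * M) * M ^ Suc i"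
        by (simp add: algebra_simps)
      thus ?thesis using LM by simp
    qed
    have "(L - M) * Delta r (Suc (Suc i)) = Delta r (Suc 0) * ((L - M) * Delta r (Suc i)) - (L - M) * Delta r i"
      by (simp add: algebra_simps)
    also have "Delta r (Suc 0) = - (L + M)" by (simp add: L_def M_def)
    also note IH1 also note IH2
    also have "- (L + M) * - ((-1) ^ i * (L ^ Suc (Suc i) - M ^ Suc (Suc i))) - (-1) ^ i * (L ^ Suc i - M ^ Suc i)
        = (-1) ^ i * ((L + M) * (L ^ Suc (Suc i) - M ^ Suc (Suc i)) - (L ^ Suc i - M ^ Suc i))"
      by (simp add: algebra_simps)
    also note key
    finally have "(L - M) * Delta r (Suc (Suc i)) = (-1) ^ Suc (Suc i) * (L ^ Suc (Suc (Suc i)) - M ^ Suc (Suc (Suc i)))"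
      by simp
    thus ?case using Suc by simp
  qed
  thus ?thesis by simp
qed

lemma frob_u:
  assumes r: "r > 0" and p: "prime p" "odd p" and L: "L \<in> Rr r" and M: "M \<in> Rr r"
  shows "cg r p ((L ^ c - M ^ c) ^ (p ^ s)) (L ^ (c * p ^ s) - M ^ (c * p ^ s))"
proof (induction s)
  case 0 show ?case using cg_refl[OF r] by simp
next
  case (Suc s)
  let ?A = "L ^ (c * p ^ s)" and ?B = "M ^ (c * p ^ s)"
  have A: "?A \<in> Rr r" and B: "?B \<in> Rr r" using L M r by (auto intro: Rr_power)
  have u: "L ^ c - M ^ c \<in> Rr r" using L M r by (auto intro: Rr_power Rr_diff)
  have "(L ^ c - M ^ c) ^ (p ^ Suc s) = ((L ^ c - M ^ c) ^ (p ^ s)) ^ p"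
    by (simp only: power_mult[symmetric] power_Suc2)
  moreover have "cg r p (((L ^ c - M ^ c) ^ (p ^ s)) ^ p) ((?A - ?B) ^ p)"
    by (rule cg_pow[OF r Suc]) (use u A B r in \<open>auto intro: Rr_power Rr_diff\<close>)
  moreover have "cg r p ((?A + (- ?B)) ^ p) (?A ^ p + (- ?B) ^ p)"
    by (rule frob[OF r p(1) A Rr_neg[OF B]])
  moreover have "?A ^ p + (- ?B) ^ p = L ^ (c * p ^ Suc s) - M ^ (c * p ^ Suc s)"
    using p(2) by (simp add: power_minus_odd power_mult[symmetric] mult.commute mult.left_commute)
  ultimately show ?case using cg_trans[OF r] by (simp only: diff_conv_add_uminus)
qed



lemma Legendre_pm1:
  assumes "\<not> int p dvd a"
  shows "Legendre a (int p) = 1 \<or> Legendre a (int p) = -1"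
proof -
  have "\<not> [a = 0] (mod int p)" using assms by (simp add: cong_0_iff)
  thus ?thesis by (auto simp: Legendre_def)
qed

lemma E_step:
  fixes p s :: nat
  assumes "odd p"
  shows "(p ^ Suc s - 1) div 2 = p * ((p ^ s - 1) div 2) + (p - 1) div 2"
proof -
  have p1: "p \<ge> 1" using assms by (cases p) auto
  have ps: "p ^ s \<ge> 1" using p1 by simp
  have o1: "odd (p ^ s)" using assms by simp
  have e1: "2 * ((p ^ s - 1) div 2) = p ^ s - 1" using o1 ps by (simp add: odd_pos)
  have e2: "2 * ((p - 1) div 2) = p - 1" using assms p1 by (simp add: odd_pos)
  have A: "p * (p ^ s - 1) = p * p ^ s - p" by (simp add: right_diff_distrib')
  have B: "p \<le> p * p ^ s" using ps by simp
  have "p ^ Suc s - 1 = p * (p ^ s - 1) + (p - 1)"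
    unfolding A using B p1 by simp
  also have "\<dots> = 2 * (p * ((p ^ s - 1) div 2) + (p - 1) div 2)"
    using e1 e2 by (metis distrib_left mult.left_commute)
  finally show ?thesis by simp
qed

lemma euler_pow:
  fixes p s :: nat and a :: int
  assumes p: "prime p" "odd p" and nd: "\<not> int p dvd a"
  shows "[a ^ ((p ^ s - 1) div 2) = Legendre a (int p) ^ s] (mod int p)"
proof (induction s)
  case 0 thus ?case by simp
next
  case (Suc s)
  let ?Lg = "Legendre a (int p)"
  have "2 \<le> p" by (rule prime_ge_2_nat[OF p(1)])
  moreover have "p \<noteq> 2" using p(2) by auto
  ultimately have p2: "2 < p" by linarith
  have eu: "[?Lg = a ^ ((p - 1) div 2)] (mod int p)" by (rule euler_criterion[OF p(1) p2])
  have "a ^ ((p ^ Suc s - 1) div 2) = (a ^ ((p ^ s - 1) div 2)) ^ p * a ^ ((p - 1) div 2)"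
  proof -
    have "a ^ (p * ((p ^ s - 1) div 2)) = (a ^ ((p ^ s - 1) div 2)) ^ p"
      by (simp only: power_mult[symmetric] mult.commute)
    thus ?thesis unfolding E_step[OF p(2)] power_add by simp
  qed
  moreover have "[(a ^ ((p ^ s - 1) div 2)) ^ p * a ^ ((p - 1) div 2) = (?Lg ^ s) ^ p * ?Lg] (mod int p)"
    by (intro cong_mult cong_pow Suc cong_sym[OF eu])
  moreover have "(?Lg ^ s) ^ p = ?Lg ^ s"
  proof -
    have l: "?Lg ^ p = ?Lg" using Legendre_pm1[OF nd] p(2) by (auto simp: power_minus_odd)
    have "(?Lg ^ s) ^ p = (?Lg ^ p) ^ s" by (simp only: power_mult[symmetric] mult.commute)
    thus ?thesis using l by simp
  qed
  ultimately show ?case by (simp add: mult.commute)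
qed



lemma unit_cong:
  fixes X A B K :: complex
  assumes XB: "X * B = 1" and AA: "A * A = 1" and BA: "B - A = P * K"
  shows "X - A = P * (- (X * A * K))"
proof -
  have "P * (- (X * A * K)) = - (X * A) * (B - A)" using BA by (simp add: algebra_simps)
  also have "\<dots> = - A * (X * B) + X * (A * A)" by (simp add: algebra_simps)
  also have "\<dots> = X - A" using XB AA by simp
  finally show ?thesis by simp
qed

lemma pow_of_int_mult: "(X::complex) ^ e * of_int (N ^ e) = (X * of_int N) ^ e"
  by (simp add: power_mult_distrib)

theorem proposition3:
  fixes p s r :: nat and \<epsilon> :: int
  assumes "prime p" and "odd p" and "s \<ge> 1" and "r \<ge> 3"
    and "\<epsilon> = 1 \<or> \<epsilon> = -1"
    and "int r dvd (int p ^ s + \<epsilon>) div 2"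
  shows "cong_mod_module r p (omega_tilde r p s)
           (scaled_omega r (of_int (- \<epsilon> * Legendre (- 2 * int r) (int p) ^ s)))"
proof -
  have r: "r > 0" using assms(4) by simp
  define m where "m = p ^ s"
  define Lg where "Lg = Legendre (- 2 * int r) (int p)"
  define L where "L = lam r"
  define M where "M = inverse (lam r)"
  define Q :: complex where "Q = 1 / of_nat (2 * r)"
  define sq where "sq = complex_of_real (sqrt (real (2 * r)))"
  define e where "e = (p ^ s - 1) div 2"
  have oddm: "odd m" using assms(2) by (simp add: m_def)
  have m_e: "m = Suc (2 * e)" using oddm unfolding e_def m_def
    by (metis Suc_pred' add_0 dvd_mult_div_cancel even_Suc odd_pos odd_two_times_div_two_nat)
  have ev: "even (int p ^ s + \<epsilon>)" using assms(2,5) by auto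
  obtain k where k: "int p ^ s + \<epsilon> = 2 * int r * k"
  proof -
    obtain j where j: "(int p ^ s + \<epsilon>) div 2 = int r * j" using assms(6) by (auto elim: dvdE)
    have "int p ^ s + \<epsilon> = 2 * ((int p ^ s + \<epsilon>) div 2)" using ev by simp
    thus ?thesis using j that[of j] by simp
  qed
  have nd: "\<not> int p dvd (- 2 * int r)"
  proof
    assume h: "int p dvd (- 2 * int r)"
    have "int p dvd int p ^ s" using assms(3) by (simp add: dvd_power)
    moreover have "int p dvd 2 * int r * k" using h by (metis dvd_mult2 dvd_minus_iff mult_minus_left)
    ultimately have "int p dvd (2 * int r * k - int p ^ s)" by (rule dvd_diff[rotated])
    hence "int p dvd \<epsilon>" using k by (metis add_diff_cancel_left')
    hence "int p dvd 1" using assms(5) by auto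
    thus False using assms(1) by (simp add: prime_gt_1_nat)
  qed
  have L_Rr: "L \<in> Rr r" using lam_Rr[OF r] by (simp add: L_def)
  have L2r: "L ^ (2 * r) = 1" using lam_pow[OF r] by (simp add: L_def)
  have M_Rr: "M \<in> Rr r" unfolding M_def using inv_in_Rr[OF r lam_Rr[OF r] _ lam_pow[OF r]] r by simp
  have LmMm: "L ^ m = (if \<epsilon> = 1 then M else L) \<and> M ^ m = (if \<epsilon> = 1 then L else M)"
  proof (cases "\<epsilon> = 1")
    case True
    have "0 < int p ^ s + \<epsilon>" using True by (simp add: add_nonneg_pos)
    hence "0 < 2 * int r * k" using k by simp
    hence "k > 0" using r by (simp add: zero_less_mult_iff)
    hence "int (m + 1) = int (2 * r * nat k)" using k True unfolding m_def by simp
    hence mk: "m + 1 = 2 * r * nat k" by (simp only: of_nat_eq_iff)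
    have "L * L ^ m = L ^ (m + 1)" by simp
    also have "\<dots> = (L ^ (2 * r)) ^ nat k" unfolding mk by (simp only: power_mult)
    finally have "L * L ^ m = 1" using L2r by simp
    hence LM: "L ^ m = M" unfolding M_def L_def by (rule inverse_unique[symmetric])
    hence "M ^ m = L" unfolding M_def L_def using lam_ne0[of r] by (simp add: power_inverse)
    thus ?thesis using LM True by simp
  next
    case False
    hence em: "\<epsilon> = -1" using assms(5) by simp
    have "1 \<le> int p ^ s" using assms(1) by (simp add: prime_gt_0_nat Suc_leI)
    hence "0 \<le> int p ^ s + \<epsilon>" using em prime_gt_0_nat[OF assms(1)] by simp
    hence "0 \<le> 2 * int r * k" using k by simp
    hence "k \<ge> 0" using r by (simp add: zero_le_mult_iff)
    hence "int m = int (2 * r * nat k + 1)" using k em unfolding m_def by simp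
    hence mk: "m = 2 * r * nat k + 1" by (simp only: of_nat_eq_iff)
    have "L ^ m = (L ^ (2 * r)) ^ nat k * L" unfolding mk by (simp only: power_add power_mult power_one_right)
    hence LM: "L ^ m = L" using L2r by simp
    hence "M ^ m = M" unfolding M_def L_def using lam_ne0[of r] by (simp add: power_inverse)
    thus ?thesis using LM False by simp
  qed
  have u_frob: "cg r p ((L ^ c - M ^ c) ^ m) (of_int (- \<epsilon>) * (L ^ c - M ^ c))" for c
  proof -
    have "cg r p ((L ^ c - M ^ c) ^ m) (L ^ (c * m) - M ^ (c * m))"
      unfolding m_def by (rule frob_u[OF r assms(1,2) L_Rr M_Rr])
    moreover have "L ^ (c * m) - M ^ (c * m) = of_int (- \<epsilon>) * (L ^ c - M ^ c)"
    proof -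
      have "L ^ (c * m) - M ^ (c * m) = (L ^ m) ^ c - (M ^ m) ^ c"
        by (simp only: power_mult[symmetric] mult.commute)
      thus ?thesis using LmMm assms(5) by auto
    qed
    ultimately show ?thesis by simp
  qed
  have Lg_pm: "Lg = 1 \<or> Lg = -1" unfolding Lg_def by (rule Legendre_pm1[OF nd])
  have Q_Rr: "Q \<in> Rr r" unfolding Q_def by (rule Rr_inv2r[OF r])
  have Qpow: "cg r p ((- Q) ^ e) (of_int (Lg ^ s))"
  proof -
    have cgi: "[(- 2 * int r) ^ e = Lg ^ s] (mod int p)"
      unfolding e_def Lg_def by (rule euler_pow[OF assms(1,2) nd])
    hence "int p dvd ((- 2 * int r) ^ e - Lg ^ s)" by (simp add: cong_iff_dvd_diff)
    then obtain K where K: "(- 2 * int r) ^ e - Lg ^ s = int p * K" by (elim dvdE)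
    have XB: "(- Q) ^ e * of_int ((- 2 * int r) ^ e) = 1"
    proof -
      have "(- Q) * of_int (- 2 * int r) = 1" unfolding Q_def using r by simp
      hence "((- Q) * of_int (- 2 * int r)) ^ e = 1" by simp
      moreover have "(- Q) ^ e * of_int ((- 2 * int r) ^ e) = ((- Q) * of_int (- 2 * int r)) ^ e"
        by (rule pow_of_int_mult)
      ultimately show ?thesis by simp
    qed
    have AA: "of_int (Lg ^ s) * of_int (Lg ^ s) = (1::complex)" using Lg_pm
      by (auto simp: power_mult_distrib[symmetric])
    have BA: "of_int ((- 2 * int r) ^ e) - of_int (Lg ^ s) = of_nat p * (of_int K :: complex)"
    proof -
      have "of_int ((- 2 * int r) ^ e - Lg ^ s) = (of_int (int p * K) :: complex)" using K by simp
      thus ?thesis by simp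
    qed
    have "(- Q) ^ e - of_int (Lg ^ s) = of_nat p * (- ((- Q) ^ e * of_int (Lg ^ s) * of_int K))"
      by (rule unit_cong[OF XB AA BA])
    moreover have "- ((- Q) ^ e * of_int (Lg ^ s) * of_int K) \<in> Rr r"
      using Q_Rr r by (intro Rr_neg Rr_mult Rr_power Rr_int Rr_neg) auto
    ultimately show ?thesis unfolding cg_def by blast
  qed
  have sq_Rr: "sq \<in> Rr r" unfolding sq_def by (rule sqrt2r_Rr[OF r])
  have sq2: "sq * sq = of_nat (2 * r)"
  proof -
    have "sqrt (real (2 * r)) * sqrt (real (2 * r)) = real (2 * r)" by simp
    hence "complex_of_real (sqrt (real (2 * r)) * sqrt (real (2 * r))) = complex_of_real (real (2 * r))" by simp
    thus ?thesis unfolding sq_def by (simp only: of_real_mult of_real_of_nat_eq)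
  qed
  have sq0: "sq \<noteq> 0" using sq2 r by auto
  have invsq: "1 / sq = sq * Q" unfolding Q_def using sq2 sq0 r by (simp add: field_simps)
  show ?thesis unfolding cong_mod_module_def
  proof (intro allI impI)
    fix i assume i: "i \<le> r - 2"
    define a where "a = - \<i> * (-1) ^ i / sq"
    define u where "u = L ^ Suc i - M ^ Suc i"
    have a_Rr: "a \<in> Rr r"
    proof -
      have "a = - \<i> * of_int ((-1) ^ i) * (sq * Q)" unfolding a_def invsq[symmetric] by simp
      moreover have "(-1::complex) ^ i \<in> Rr r" using Rr_int[OF r, of "(-1) ^ i"] by simp
      ultimately show ?thesis using i_Rr[OF r] sq_Rr Q_Rr r by (auto intro!: Rr_mult Rr_neg)
    qed
    have u_Rr: "u \<in> Rr r" unfolding u_def using L_Rr M_Rr r by (intro Rr_diff Rr_power)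
    have a2: "a ^ 2 = - Q"
    proof -
      have o: "(-1::complex) ^ i * (-1) ^ i = 1" by (simp add: power_mult_distrib[symmetric])
      have "(- \<i> * (-1) ^ i) * (- \<i> * (-1) ^ i) = (\<i> * \<i>) * ((-1::complex) ^ i * (-1) ^ i)"
        by (simp only: mult_ac mult_minus_left mult_minus_right minus_minus)
      also have "\<dots> = -1" unfolding o by simp
      finally have n: "(- \<i> * (-1) ^ i) * (- \<i> * (-1) ^ i) = (-1::complex)" .
      have "a ^ 2 = (- \<i> * (-1) ^ i) * (- \<i> * (-1) ^ i) / (sq * sq)"
        unfolding a_def power2_eq_square by (rule times_divide_times_eq)
      also have "\<dots> = - Q" unfolding n sq2 Q_def by simp
      finally show ?thesis .
    qed
    have x: "eta r * Delta r i = a * u"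
    proof -
      have "eta r * Delta r i = - \<i> * ((L - M) * Delta r i) / sq"
        unfolding eta_def sq_def L_def M_def by simp
      also have "(L - M) * Delta r i = (-1) ^ i * u"
        unfolding L_def M_def u_def by (rule Delta_closed)
      finally show ?thesis unfolding a_def by simp
    qed
    have xm: "(eta r * Delta r i) ^ m = (a * (- Q) ^ e) * u ^ m"
    proof -
      have "(eta r * Delta r i) ^ m = a ^ m * u ^ m" unfolding x by (simp add: power_mult_distrib)
      also have "a ^ m = a * (a ^ 2) ^ e" unfolding m_e by (simp add: power_mult)
      finally show ?thesis unfolding a2 by simp
    qed
    have c1: "cg r p (a * (- Q) ^ e) (a * of_int (Lg ^ s))"
      by (rule cg_mult[OF r cg_refl[OF r] Qpow a_Rr Rr_int[OF r]])
    have c2: "cg r p ((a * (- Q) ^ e) * u ^ m) ((a * of_int (Lg ^ s)) * (of_int (- \<epsilon>) * u))"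
      by (rule cg_mult[OF r c1 u_frob[of "Suc i", folded u_def]])
        (use a_Rr Q_Rr u_Rr r in \<open>auto intro!: Rr_mult Rr_power Rr_neg Rr_int\<close>)
    have rhs: "(a * of_int (Lg ^ s)) * (of_int (- \<epsilon>) * u) = of_int (- \<epsilon> * Lg ^ s) * eta r * Delta r i"
      using x by (simp add: algebra_simps)
    have o1: "omega_tilde r p s i = (a * (- Q) ^ e) * u ^ m"
      using i xm unfolding omega_tilde_def m_def by simp
    have o2: "scaled_omega r (of_int (- \<epsilon> * Legendre (- 2 * int r) (int p) ^ s)) i
        = (a * of_int (Lg ^ s)) * (of_int (- \<epsilon>) * u)"
    proof -
      have "scaled_omega r (of_int (- \<epsilon> * Legendre (- 2 * int r) (int p) ^ s)) i
          = of_int (- \<epsilon> * Lg ^ s) * eta r * Delta r i"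
        using i unfolding scaled_omega_def Lg_def by (simp only: if_True)
      also have "\<dots> = (a * of_int (Lg ^ s)) * (of_int (- \<epsilon>) * u)" by (rule rhs[symmetric])
      finally show ?thesis .
    qed
    show "\<exists>z\<in>Rr r. omega_tilde r p s i - scaled_omega r (of_int (- \<epsilon> * Legendre (- 2 * int r) (int p) ^ s)) i = of_nat p * z"
      using c2 unfolding o1 o2 cg_def .
  qed
qed


end
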